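(* Let $G$ be a connected $d$-regular simple graph of order $n$, where $d\ge 3$. Then \[ \mathscr{K}_{nb}(G)=\frac{(d-2)\,\mathscr{K}_e(G)}{d}+2n+\frac{1}{d-2}-\frac{n}{d}. \]
   Context: Kemeny's constant of an irreducible finite Markov chain with transition matrix $P$ whose eigenvalues (with multiplicity) are $1=\rho_1,\rho_2,\dots,\rho_N$ (with $1$ simple) is $\mathscr{K}(P)=\sum_{i=2}^{N}\frac{1}{1-\rho_i}$; equivalently $\sum_{j\neq i}\pi_jm_{ij}$ with $\pi$ the stationary distribution and $m_{ij}$ mean first passage times. Arcs of $G$: for each edge $\{u,v\}$ the two ordered pairs $(u,v),(v,u)$. The edge Kemeny's constant $\mathscr{K}_e(G)$ is Kemeny's constant of the chain on arcs where from $(u,v)$ one moves to $(v,w)$ with probability $1/\deg(v)$ for each neighbor $w$ of $v$. The non-backtracking Kemeny's constant $\mathscr{K}_{nb}(G)$ is Kemeny's constant of the non-backtracking random walk on arcs, with transition matrix $P_{nb}$: from $(u,v)$ one moves to $(v,w)$ with probability $1/(\deg(v)-1)$ for each neighbor $w\ne u$ of $v$, all other transition probabilities being $0$. *)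

theory Defs
  imports "Jordan_Normal_Form.Char_Poly" "HOL-Computational_Algebra.Fundamental_Theorem_Algebra"
begin

definition simple_graph :: "'a set \<Rightarrow> ('a \<Rightarrow> 'a \<Rightarrow> bool) \<Rightarrow> bool" where
  "simple_graph V E \<longleftrightarrow> finite V \<and> (\<forall>u v. E u v \<longrightarrow> u \<in> V \<and> v \<in> V)
     \<and> (\<forall>u v. E u v \<longrightarrow> E v u) \<and> (\<forall>v. \<not> E v v)"

definition degree :: "'a set \<Rightarrow> ('a \<Rightarrow> 'a \<Rightarrow> bool) \<Rightarrow> 'a \<Rightarrow> nat" where
  "degree V E v = card {w \<in> V. E v w}"

definition regular :: "'a set \<Rightarrow> ('a \<Rightarrow> 'a \<Rightarrow> bool) \<Rightarrow> nat \<Rightarrow> bool" where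
  "regular V E d \<longleftrightarrow> (\<forall>v\<in>V. degree V E v = d)"

definition connected :: "'a set \<Rightarrow> ('a \<Rightarrow> 'a \<Rightarrow> bool) \<Rightarrow> bool" where
  "connected V E \<longleftrightarrow> V \<noteq> {} \<and> (\<forall>u\<in>V. \<forall>v\<in>V. (\<lambda>x y. x \<in> V \<and> y \<in> V \<and> E x y)\<^sup>*\<^sup>* u v)"

definition arcs :: "'a set \<Rightarrow> ('a \<Rightarrow> 'a \<Rightarrow> bool) \<Rightarrow> ('a \<times> 'a) set" where
  "arcs V E = {(u, v). u \<in> V \<and> v \<in> V \<and> E u v}"

text \<open>A fixed enumeration of the arcs (Kemeny's constant does not depend on it).\<close>
definition arc_list :: "'a set \<Rightarrow> ('a \<Rightarrow> 'a \<Rightarrow> bool) \<Rightarrow> ('a \<times> 'a) list" where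
  "arc_list V E = (SOME xs. distinct xs \<and> set xs = arcs V E)"

definition arc_matrix :: "'a set \<Rightarrow> ('a \<Rightarrow> 'a \<Rightarrow> bool) \<Rightarrow> ('a \<times> 'a \<Rightarrow> 'a \<times> 'a \<Rightarrow> real) \<Rightarrow> real mat" where
  "arc_matrix V E p = (let xs = arc_list V E in
     mat (length xs) (length xs) (\<lambda>(i, j). p (xs ! i) (xs ! j)))"

definition P_edge :: "'a set \<Rightarrow> ('a \<Rightarrow> 'a \<Rightarrow> bool) \<Rightarrow> real mat" where
  "P_edge V E = arc_matrix V E (\<lambda>(u, v) (v', w).
     if v' = v \<and> E v w then 1 / real (degree V E v) else 0)"

definition P_nb :: "'a set \<Rightarrow> ('a \<Rightarrow> 'a \<Rightarrow> bool) \<Rightarrow> real mat" where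
  "P_nb V E = arc_matrix V E (\<lambda>(u, v) (v', w).
     if v' = v \<and> E v w \<and> w \<noteq> u then 1 / (real (degree V E v) - 1) else 0)"

definition kemeny :: "real mat \<Rightarrow> complex" where
  "kemeny P = (\<Sum>\<rho>\<in># proots (char_poly (map_mat complex_of_real P)) - {#1#}. 1 / (1 - \<rho>))"

definition kemeny_edge :: "'a set \<Rightarrow> ('a \<Rightarrow> 'a \<Rightarrow> bool) \<Rightarrow> complex" where
  "kemeny_edge V E = kemeny (P_edge V E)"

definition kemeny_nb :: "'a set \<Rightarrow> ('a \<Rightarrow> 'a \<Rightarrow> bool) \<Rightarrow> complex" where
  "kemeny_nb V E = kemeny (P_nb V E)"

end

theory Submission
  imports Defs "Jordan_Normal_Form.Jordan_Normal_Form_Uniqueness" "Jordan_Normal_Form.Jordan_Normal_Form_Existence"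
begin

lemma sylvester_det:
  fixes X :: "'a :: idom mat"
  assumes X: "X \<in> carrier_mat N n" and Y: "Y \<in> carrier_mat n N"
  shows "det (1\<^sub>m N - X * Y) = det (1\<^sub>m n - Y * X)"
proof -
  define M where "M = four_block_mat (1\<^sub>m n) Y X (1\<^sub>m N)"
  define L1 where "L1 = four_block_mat (1\<^sub>m n) (0\<^sub>m n N) (- X) (1\<^sub>m N)"
  define L2 where "L2 = four_block_mat (1\<^sub>m n) (- Y) (0\<^sub>m N n) (1\<^sub>m N)"
  have M: "M \<in> carrier_mat (n+N) (n+N)" unfolding M_def using X Y by auto
  have L1: "L1 \<in> carrier_mat (n+N) (n+N)" unfolding L1_def using X Y by auto
  have L2: "L2 \<in> carrier_mat (n+N) (n+N)" unfolding L2_def using X Y by auto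
  have dL1: "det L1 = 1" unfolding L1_def
    by (subst det_four_block_mat_upper_right_zero[of _ n _ N], insert X, auto)
  have dL2: "det L2 = 1" unfolding L2_def
    by (subst det_four_block_mat_lower_left_zero[of _ n _ N], insert Y, auto)
  have "L1 * M = four_block_mat (1\<^sub>m n * 1\<^sub>m n + 0\<^sub>m n N * X) (1\<^sub>m n * Y + 0\<^sub>m n N * 1\<^sub>m N)
      (- X * 1\<^sub>m n + 1\<^sub>m N * X) (- X * Y + 1\<^sub>m N * 1\<^sub>m N)"
    unfolding L1_def M_def by (rule mult_four_block_mat, insert X Y, auto)
  also have "\<dots> = four_block_mat (1\<^sub>m n) Y (0\<^sub>m N n) (1\<^sub>m N - X * Y)"
  proof -
    have "1\<^sub>m n * 1\<^sub>m n + 0\<^sub>m n N * X = 1\<^sub>m n" using X by auto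
    moreover have "1\<^sub>m n * Y + 0\<^sub>m n N * 1\<^sub>m N = Y" using Y by auto
    moreover have "- X * 1\<^sub>m n + 1\<^sub>m N * X = 0\<^sub>m N n" using X by (intro eq_matI, auto)
    moreover have "- X * Y + 1\<^sub>m N * 1\<^sub>m N = 1\<^sub>m N - X * Y" using X Y by (intro eq_matI, auto)
    ultimately show ?thesis by simp
  qed
  finally have e1: "det (L1 * M) = det (1\<^sub>m N - X * Y)"
    by (simp, subst det_four_block_mat_lower_left_zero[of _ n _ N], insert X Y, auto)
  have "L2 * M = four_block_mat (1\<^sub>m n * 1\<^sub>m n + (- Y) * X) (1\<^sub>m n * Y + (- Y) * 1\<^sub>m N)
      (0\<^sub>m N n * 1\<^sub>m n + 1\<^sub>m N * X) (0\<^sub>m N n * Y + 1\<^sub>m N * 1\<^sub>m N)"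
    unfolding L2_def M_def by (rule mult_four_block_mat, insert X Y, auto)
  also have "\<dots> = four_block_mat (1\<^sub>m n - Y * X) (0\<^sub>m n N) X (1\<^sub>m N)"
  proof -
    have "1\<^sub>m n * 1\<^sub>m n + (- Y) * X = 1\<^sub>m n - Y * X" using X Y by (intro eq_matI, auto)
    moreover have "1\<^sub>m n * Y + (- Y) * 1\<^sub>m N = 0\<^sub>m n N" using Y by (intro eq_matI, auto)
    moreover have "0\<^sub>m N n * 1\<^sub>m n + 1\<^sub>m N * X = X" using X by auto
    moreover have "0\<^sub>m N n * Y + 1\<^sub>m N * 1\<^sub>m N = 1\<^sub>m N" using Y by auto
    ultimately show ?thesis by simp
  qed
  finally have e2: "det (L2 * M) = det (1\<^sub>m n - Y * X)"
    by (simp, subst det_four_block_mat_upper_right_zero[of _ n _ N], insert X Y, auto)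
  from e1 e2 show ?thesis using det_mult[OF L1 M] det_mult[OF L2 M] dL1 dL2 by simp
qed

lemma poly_char_poly_det:
  fixes B :: "'a :: field mat"
  assumes B: "B \<in> carrier_mat N N"
  shows "poly (char_poly B) x = det (x \<cdot>\<^sub>m 1\<^sub>m N - B)"
proof -
  have "- char_matrix B x = x \<cdot>\<^sub>m 1\<^sub>m N - B"
    unfolding char_matrix_def using B by (intro eq_matI, auto)
  then show ?thesis using char_poly_matrix[OF B] by simp
qed

lemma poly_eq_cofinite:
  fixes p q :: "complex poly"
  assumes F: "finite F" and eq: "\<And>x. x \<notin> F \<Longrightarrow> poly p x = poly q x"
  shows "p = q"
proof (rule ccontr)
  assume "p \<noteq> q"
  then have "p - q \<noteq> 0" by simp
  from poly_roots_finite[OF this] have fin: "finite {x. poly (p - q) x = 0}" .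
  have "UNIV - F \<subseteq> {x. poly (p - q) x = 0}" using eq by auto
  then have "finite (UNIV - F)" using fin finite_subset by blast
  then have "finite (UNIV :: complex set)" using F by (metis Diff_Un finite_Diff2 sup_top_left Un_UNIV_left)
  then show False using infinite_UNIV_char_0 by blast
qed

lemma quadratic_proots:
  fixes s t :: complex
  obtains a where "proots [:t, -s, 1:] = {#a, s - a#}" "t = a * (s - a)"
proof -
  let ?Q = "[:t, -s, 1:]"
  have "\<not> constant (poly ?Q)"
    by (subst constant_degree, simp)
  from fundamental_theorem_of_algebra[OF this] obtain a where a: "poly ?Q a = 0" by blast
  then have "t + a * (- s + a) = 0" by simp
  then have ta: "t = a * (s - a)" by (simp add: algebra_simps)
  have eq: "?Q = [:-a, 1:] * [:-(s-a), 1:]" using ta by (simp add: algebra_simps)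
  have "proots ?Q = proots ([:-a, 1:] * [:-(s-a), 1:])" by (simp only: eq)
  also have "\<dots> = {#a, s - a#}" by (subst proots_mult, auto)
  finally have "proots ?Q = {#a, s - a#}" .
  with ta that show ?thesis by blast
qed

lemma sum_distinct_list:
  assumes "distinct ys"
  shows "(\<Sum>k\<in>{0..<length ys}. f (ys ! k)) = (\<Sum>y\<in>set ys. f y)"
proof -
  have "bij_betw ((!) ys) {0..<length ys} (set ys)"
    using bij_betw_nth[OF assms, of "{..<length ys}" "set ys"] by (simp add: atLeast0LessThan)
  then show ?thesis by (rule sum.reindex_bij_betw)
qed

declare minus_carrier_mat[simp]

lemma prod_mset_mult_const: "(\<Prod>x\<in>#X. c * f x) = c ^ size X * (\<Prod>x\<in>#X. f x)"
  for c :: "'b :: comm_monoid_mult"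
  by (induction X) (auto simp: algebra_simps)


lemma sum_indicator:
  assumes "finite S"
  shows "(\<Sum>a\<in>S. if P a then 1 else 0) = (of_nat (card {a\<in>S. P a}) :: 'b :: semiring_1)"
  using assms by (simp add: sum.inter_filter[symmetric])

lemma kernel_dim_le1:
  fixes B :: "'b :: field mat"
  assumes B: "B \<in> carrier_mat n n" and u: "u \<in> mat_kernel B"
    and all: "\<And>x. x \<in> mat_kernel B \<Longrightarrow> \<exists>c. x = c \<cdot>\<^sub>v u"
  shows "kernel_dim B \<le> 1"
proof -
  interpret K: kernel n n B by (unfold_locales, rule B)
  have sub: "{u} \<subseteq> mat_kernel B" using u by simp
  have gen: "K.Ker.span {u} = mat_kernel B"
  proof
    show "K.Ker.span {u} \<subseteq> mat_kernel B" using K.Ker.span_is_subset2[OF sub] by simp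
    show "mat_kernel B \<subseteq> K.Ker.span {u}"
    proof
      fix x assume x: "x \<in> mat_kernel B"
      from all[OF x] obtain c where xc: "x = c \<cdot>\<^sub>v u" by blast
      have sm: "submodule class_ring (K.Ker.span {u}) K.VK" by (rule K.Ker.span_is_submodule[OF sub])
      have "u \<in> K.Ker.span {u}" by (rule K.Ker.span_mem[OF sub], simp)
      from submodule.smult_closed[OF sm _ this, of c] show "x \<in> K.Ker.span {u}" unfolding xc by simp
    qed
  qed
  have "K.Ker.dim \<le> card {u}"
    by (rule K.Ker.gen_ge_dim, simp, rule sub, unfold gen, simp)
  then show ?thesis by simp
qed

lemma order_prod_jordan:
  fixes x :: "'b :: idom"
  shows "Polynomial.order x (\<Prod>(k, a)\<leftarrow>ns. [:-a, 1:] ^ k) = (\<Sum>k\<leftarrow>map fst [(k, e)\<leftarrow>ns. e = x]. k)"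
proof (induction ns)
  case Nil
  then show ?case by simp
next
  case (Cons p ns)
  obtain k a where p: "p = (k, a)" by fastforce
  have nz1: "[:-a, 1:] ^ k \<noteq> 0" by simp
  have nz2: "(\<Prod>(k, a)\<leftarrow>ns. [:-a, 1:] ^ k) \<noteq> 0"
    by (induction ns, auto)
  have o1: "Polynomial.order x ([:-a, 1:] ^ k) = (if a = x then k else 0)"
  proof (cases "a = x")
    case True
    then show ?thesis by (simp add: order_power_n_n)
  next
    case False
    then have "poly ([:-a, 1:] ^ k) x \<noteq> 0" by simp
    then show ?thesis using False by (simp add: order_0I)
  qed
  have "Polynomial.order x (\<Prod>(k, a)\<leftarrow>p # ns. [:-a, 1:] ^ k) = Polynomial.order x ([:-a, 1:] ^ k * (\<Prod>(k, a)\<leftarrow>ns. [:-a, 1:] ^ k))"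
    unfolding p by simp
  also have "\<dots> = Polynomial.order x ([:-a, 1:] ^ k) + Polynomial.order x (\<Prod>(k, a)\<leftarrow>ns. [:-a, 1:] ^ k)"
    by (rule order_mult, use nz1 nz2 in simp)
  finally show ?case unfolding Cons.IH o1 p by simp
qed

lemma sum_min2_eq:
  fixes ks :: "nat list"
  assumes "(\<Sum>k\<leftarrow>ks. min 2 k) \<le> 1"
  shows "(\<Sum>k\<leftarrow>ks. k) = (\<Sum>k\<leftarrow>ks. min 2 k)"
  using assms
proof (induction ks)
  case Nil
  then show ?case by simp
next
  case (Cons k ks)
  then have a: "min 2 k \<le> 1" and b: "(\<Sum>k\<leftarrow>ks. min 2 k) \<le> 1" by simp_all
  from a have "k = min 2 k" by (simp add: min_def split: if_splits)
  with Cons.IH[OF b] show ?case by simp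
qed

lemma sum_min2:
  fixes ks :: "nat list"
  assumes "(\<Sum>k\<leftarrow>ks. min 2 k) \<le> 1"
  shows "(\<Sum>k\<leftarrow>ks. k) \<le> 1"
  using sum_min2_eq[OF assms] assms by simp

lemma proots_prod_mset_image:
  fixes f :: "'b \<Rightarrow> 'c :: idom poly"
  assumes "\<And>l. f l \<noteq> 0"
  shows "proots (\<Prod>l\<in>#X. f l) = (\<Sum>l\<in>#X. proots (f l))"
proof (induction X)
  case empty
  then show ?case by simp
next
  case (add x X)
  have "(\<Prod>l\<in>#X. f l) \<noteq> 0" using assms by (induction X, auto)
  then show ?case using add assms by (simp add: proots_mult)
qed

lemma sum_mset_singletons: "(\<Sum>l\<in>#X. {#f l#}) = image_mset f X"
  by (induction X) auto

lemma sum_mset_image_sum: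
  fixes h :: "'c \<Rightarrow> 'd :: comm_monoid_add"
  shows "(\<Sum>\<rho>\<in>#(\<Sum>l\<in>#X. Y l). h \<rho>) = (\<Sum>l\<in>#X. \<Sum>\<rho>\<in>#Y l. h \<rho>)"
  by (induction X) auto

lemma of_nat_Suc_mult: "(of_nat (Suc k) :: 'd :: semiring_1) * S = S + of_nat k * S"
  by (simp add: algebra_simps)

lemma sum_repeat: "(\<Sum>\<rho>\<in>#repeat_mset k X. h \<rho>) = of_nat k * (\<Sum>\<rho>\<in>#X. h \<rho>)"
  for h :: "'c \<Rightarrow> 'd :: semiring_1"
proof (induction k)
  case 0
  then show ?case by simp
next
  case (Suc k)
  have "(\<Sum>\<rho>\<in>#repeat_mset (Suc k) X. h \<rho>) = (\<Sum>\<rho>\<in>#X. h \<rho>) + (\<Sum>\<rho>\<in>#repeat_mset k X. h \<rho>)"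
    by simp
  then show ?case unfolding Suc.IH of_nat_Suc_mult .
qed

lemma t1:
  fixes D nn :: complex
  assumes D0: "D \<noteq> 0" and D2: "D \<noteq> 2"
  shows "(nn * D / 2 - nn) * ((D - 1) / (D - 2) + (D - 1) / D) + (D - 1) / (D - 2) + (nn - 1)
    = (D - 2) * (D * nn - nn) / D + 2 * nn + 1 / (D - 2) - nn / D"
proof -
  have D2': "D - 2 \<noteq> 0" using D2 by simp
  have a1: "nn * D / 2 - nn = nn * (D - 2) / 2" by (simp add: field_simps)
  have a2: "(D - 1) / (D - 2) + (D - 1) / D = 2 * (D - 1)^2 / (D * (D - 2))"
    using D0 D2' by (simp add: field_simps power2_eq_square)
  have a3: "nn * (D - 2) / 2 * (2 * (D - 1)^2 / (D * (D - 2))) = nn * (D - 1)^2 / D"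
    using D0 D2' by simp
  have a: "(nn * D / 2 - nn) * ((D - 1) / (D - 2) + (D - 1) / D) = nn * (D - 1)^2 / D"
    unfolding a1 a2 a3 ..
  have b: "(D - 1) / (D - 2) = 1 + 1 / (D - 2)"
    using D2' by (simp add: field_simps)
  have c: "(D - 2) * (D * nn - nn) / D = nn * (D - 1)^2 / D - nn * (D - 1) / D"
    using D0 by (simp add: field_simps power2_eq_square)
  have e: "nn * (D - 1) / D = nn - nn / D" using D0 by (simp add: field_simps)
  show ?thesis unfolding a c e unfolding b by (simp add: algebra_simps)
qed

lemma per_alg:
  fixes D l :: complex
  assumes D0: "D \<noteq> 0" and D1: "D - 1 \<noteq> 0" and ld: "D - l \<noteq> 0"
  shows "(2 - l / (D - 1)) / (1 - l / (D - 1) + 1 / (D - 1)) = (D - 2) / D * (1 / (1 - l / D)) + 1"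
proof -
  have n1: "2 - l / (D - 1) = (2 * D - 2 - l) / (D - 1)" using D1 by (simp add: field_simps)
  have n2: "1 - l / (D - 1) + 1 / (D - 1) = (D - l) / (D - 1)" using D1 by (simp add: field_simps)
  have n3: "(2 * D - 2 - l) / (D - 1) / ((D - l) / (D - 1)) = (2 * D - 2 - l) / (D - l)"
    using D1 ld by simp
  have n4: "1 - l / D = (D - l) / D" using D0 by (simp add: field_simps)
  have n5: "(D - 2) / D * (1 / ((D - l) / D)) = (D - 2) / (D - l)" using D0 ld by simp
  have n6: "(D - 2) / (D - l) + 1 = (2 * D - 2 - l) / (D - l)" using ld by (simp add: field_simps)
  show ?thesis unfolding n1 n2 n3 n4 n5 n6 ..
qed

locale kgraph =
  fixes V :: "'a set" and E :: "'a \<Rightarrow> 'a \<Rightarrow> bool" and d :: nat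
  assumes sg: "simple_graph V E" and conn: "connected V E" and reg: "regular V E d"
    and d3: "d \<ge> 3"
begin

definition xs where "xs = arc_list V E"
definition vs where "vs = (SOME vs. distinct vs \<and> set vs = V)"
definition N where "N = length xs"
definition n where "n = length vs"
definition so :: "'a \<times> 'a \<Rightarrow> 'a set" where "so a = {fst a, snd a}"
definition es where "es = (SOME es. distinct es \<and> set es = so ` arcs V E)"
definition M where "M = length es"

lemma finV[simp]: "finite V" using sg unfolding simple_graph_def by blast
lemma Esym: "E u v \<Longrightarrow> E v u" using sg unfolding simple_graph_def by blast
lemma Eirr: "\<not> E v v" using sg unfolding simple_graph_def by blast
lemma EV: "E u v \<Longrightarrow> u \<in> V" "E u v \<Longrightarrow> v \<in> V" using sg unfolding simple_graph_def by blast+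

lemma arcs_sub: "arcs V E \<subseteq> V \<times> V" unfolding arcs_def by auto

lemma fin_arcs[simp]: "finite (arcs V E)" using arcs_sub finV finite_subset by blast

lemma arcsD: assumes "a \<in> arcs V E"
  shows "fst a \<in> V" "snd a \<in> V" "E (fst a) (snd a)" "fst a \<noteq> snd a" "prod.swap a \<in> arcs V E"
  using assms Esym[of "fst a" "snd a"] Eirr[of "fst a"] unfolding arcs_def by (auto simp: case_prod_beta)

lemma arcs_iff: "(u, v) \<in> arcs V E \<longleftrightarrow> E u v"
  using EV unfolding arcs_def by auto

lemma xs: "distinct xs" "set xs = arcs V E"
proof -
  obtain ys where "distinct ys \<and> set ys = arcs V E" using finite_distinct_list[OF fin_arcs] by blast
  then have "distinct (arc_list V E) \<and> set (arc_list V E) = arcs V E"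
    unfolding arc_list_def by (rule someI)
  then show "distinct xs" "set xs = arcs V E" unfolding xs_def by blast+
qed

lemma vs: "distinct vs" "set vs = V"
proof -
  have ex: "\<exists>ys. distinct ys \<and> set ys = V" using finite_distinct_list[OF finV] by blast
  have "distinct (SOME ys. distinct ys \<and> set ys = V) \<and> set (SOME ys. distinct ys \<and> set ys = V) = V"
    by (rule someI_ex[OF ex])
  then show "distinct vs" "set vs = V" unfolding vs_def by simp_all
qed

lemma es: "distinct es" "set es = so ` arcs V E"
proof -
  from finite_distinct_list[OF finite_imageI[OF fin_arcs, of so]] obtain ys
    where ys: "set ys = so ` arcs V E" "distinct ys" by (elim exE conjE)
  have ex: "\<exists>ys. distinct ys \<and> set ys = so ` arcs V E" by (intro exI[of _ ys] conjI ys)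
  have "distinct (SOME ys. distinct ys \<and> set ys = so ` arcs V E) \<and> set (SOME ys. distinct ys \<and> set ys = so ` arcs V E) = so ` arcs V E"
    by (rule someI_ex[OF ex])
  then have "distinct es \<and> set es = so ` arcs V E" unfolding es_def .
  then show "distinct es" "set es = so ` arcs V E" by (rule conjunct1, rule conjunct2)
qed

lemma n_card: "n = card V" unfolding n_def using distinct_card[OF vs(1)] vs(2) by simp

lemma deg: "v \<in> V \<Longrightarrow> degree V E v = d" using reg unfolding regular_def by auto

lemma xs_nth: "i < N \<Longrightarrow> xs ! i \<in> arcs V E" unfolding N_def using xs(2) nth_mem by blast

lemma vs_nth: "k < n \<Longrightarrow> vs ! k \<in> V" unfolding n_def using vs(2) nth_mem by blast

lemma sum_xs: "(\<Sum>i\<in>{0..<N}. f (xs ! i)) = (\<Sum>a\<in>arcs V E. f a)"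
  unfolding N_def using sum_distinct_list[OF xs(1)] xs(2) by simp

lemma sum_vs: "(\<Sum>i\<in>{0..<n}. f (vs ! i)) = (\<Sum>a\<in>V. f a)"
  unfolding n_def using sum_distinct_list[OF vs(1)] vs(2) by simp

lemma sum_es: "(\<Sum>i\<in>{0..<M}. f (es ! i)) = (\<Sum>a\<in>so ` arcs V E. f a)"
  unfolding M_def using sum_distinct_list[OF es(1)] es(2) by simp

lemma card_in: "v \<in> V \<Longrightarrow> card {a \<in> arcs V E. snd a = v} = d"
proof -
  assume v: "v \<in> V"
  have "{a \<in> arcs V E. snd a = v} = (\<lambda>u. (u, v)) ` {w \<in> V. E v w}"
    using EV Esym[of v] Esym[of _ v] unfolding arcs_def by auto
  moreover have "inj_on (\<lambda>u. (u, v)) {w \<in> V. E v w}" by (auto simp: inj_on_def)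
  ultimately show ?thesis using card_image deg[OF v] unfolding degree_def by metis
qed

lemma so_eq: assumes "a \<in> arcs V E" "b \<in> arcs V E"
  shows "so a = so b \<longleftrightarrow> b = a \<or> b = prod.swap a"
  using assms unfolding so_def by (cases a, cases b, auto simp: doubleton_eq_iff)

lemma card_so: assumes "a \<in> arcs V E" shows "card {b \<in> arcs V E. so b = so a} = 2"
proof -
  have "{b \<in> arcs V E. so b = so a} = {a, prod.swap a}"
    using so_eq[OF assms] arcsD[OF assms] assms by (auto simp: so_def)
  moreover have "a \<noteq> prod.swap a" using arcsD(4)[OF assms] by (cases a, auto)
  ultimately show ?thesis by simp
qed

definition H :: "complex mat" where "H = mat N n (\<lambda>(i,k). if snd (xs ! i) = vs ! k then 1 else 0)"
definition T :: "complex mat" where "T = mat n N (\<lambda>(k,j). if fst (xs ! j) = vs ! k then 1 else 0)"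
definition J :: "complex mat" where "J = mat N N (\<lambda>(i,j). if xs ! j = prod.swap (xs ! i) then 1 else 0)"
definition A :: "complex mat" where "A = mat n n (\<lambda>(k,l). if E (vs ! k) (vs ! l) then 1 else 0)"
definition R :: "complex mat" where "R = mat N M (\<lambda>(i,k). if so (xs ! i) = es ! k then 1 else 0)"

lemma carriers[simp]: "H \<in> carrier_mat N n" "T \<in> carrier_mat n N" "J \<in> carrier_mat N N"
  "A \<in> carrier_mat n n" "R \<in> carrier_mat N M"
  unfolding H_def T_def J_def A_def R_def by auto

lemma dims[simp]: "dim_row H = N" "dim_col H = n" "dim_row T = n" "dim_col T = N"
  "dim_row J = N" "dim_col J = N" "dim_row A = n" "dim_col A = n" "dim_row R = N" "dim_col R = M"
  unfolding H_def T_def J_def A_def R_def by auto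

lemma mult_entry: assumes "X \<in> carrier_mat nr m" "Y \<in> carrier_mat m nc" "i < nr" "j < nc"
  shows "(X * Y) $$ (i, j) = (\<Sum>k\<in>{0..<m}. X $$ (i, k) * Y $$ (k, j))"
  using assms by (auto simp: scalar_prod_def)

lemma HT: "H * T = mat N N (\<lambda>(i,j). if snd (xs ! i) = fst (xs ! j) then 1 else 0)"
proof (rule eq_matI)
  fix i j assume i: "i < dim_row (mat N N (\<lambda>(i,j). if snd (xs ! i) = fst (xs ! j) then (1::complex) else 0))"
    and j: "j < dim_col (mat N N (\<lambda>(i,j). if snd (xs ! i) = fst (xs ! j) then (1::complex) else 0))"
  then have i: "i < N" and j: "j < N" by auto
  have "(H * T) $$ (i, j) = (\<Sum>k\<in>{0..<n}. (if snd (xs ! i) = vs ! k then 1 else 0) * (if fst (xs ! j) = vs ! k then 1 else 0))"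
    using i j by (subst mult_entry[of _ N n _ N], auto simp: H_def T_def)
  also have "\<dots> = (\<Sum>v\<in>V. (if snd (xs ! i) = v then 1 else 0) * (if fst (xs ! j) = v then 1 else 0))"
    by (rule sum_vs)
  also have "\<dots> = (\<Sum>v\<in>V. if v = snd (xs ! i) then (if fst (xs ! j) = v then 1 else 0) else 0)"
    by (rule sum.cong, auto)
  also have "\<dots> = (if snd (xs ! i) = fst (xs ! j) then 1 else 0)"
    using arcsD(2)[OF xs_nth[OF i]] by (subst sum.delta, auto)
  finally show "(H * T) $$ (i, j) = mat N N (\<lambda>(i,j). if snd (xs ! i) = fst (xs ! j) then (1::complex) else 0) $$ (i, j)"
    using i j by simp
qed auto

lemma TH: "T * H = A"
proof (rule eq_matI)
  fix k l assume "k < dim_row A" "l < dim_col A"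
  then have k: "k < n" and l: "l < n" by auto
  have "(T * H) $$ (k, l) = (\<Sum>i\<in>{0..<N}. (if fst (xs ! i) = vs ! k then 1 else 0) * (if snd (xs ! i) = vs ! l then 1 else 0))"
    using k l by (subst mult_entry[of _ n N _ n], auto simp: H_def T_def)
  also have "\<dots> = (\<Sum>a\<in>arcs V E. (if fst a = vs ! k then 1 else 0) * (if snd a = vs ! l then 1 else 0))"
    by (rule sum_xs)
  also have "\<dots> = (\<Sum>a\<in>arcs V E. if a = (vs ! k, vs ! l) then 1 else 0)"
    by (rule sum.cong, auto)
  also have "\<dots> = (if E (vs ! k) (vs ! l) then 1 else 0)"
    by (subst sum.delta, auto simp: arcs_iff)
  finally show "(T * H) $$ (k, l) = A $$ (k, l)" using k l by (simp add: A_def)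
qed auto

lemma TJ: "T * J = transpose_mat H"
proof (rule eq_matI)
  fix k j assume "k < dim_row (transpose_mat H)" "j < dim_col (transpose_mat H)"
  then have k: "k < n" and j: "j < N" by auto
  have "(T * J) $$ (k, j) = (\<Sum>i\<in>{0..<N}. (if fst (xs ! i) = vs ! k then 1 else 0) * (if xs ! j = prod.swap (xs ! i) then 1 else 0))"
    using k j by (subst mult_entry[of _ n N _ N], auto simp: J_def T_def)
  also have "\<dots> = (\<Sum>a\<in>arcs V E. (if fst a = vs ! k then 1 else 0) * (if xs ! j = prod.swap a then 1 else 0))"
    by (rule sum_xs)
  also have "\<dots> = (\<Sum>a\<in>arcs V E. if a = prod.swap (xs ! j) then (if fst a = vs ! k then 1 else 0) else 0)"
    by (rule sum.cong, auto)
  also have "\<dots> = (if snd (xs ! j) = vs ! k then 1 else 0)"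
    using arcsD(5)[OF xs_nth[OF j]] by (subst sum.delta, auto)
  finally show "(T * J) $$ (k, j) = transpose_mat H $$ (k, j)" using k j by (simp add: H_def)
qed auto

lemma HtH: "transpose_mat H * H = of_nat d \<cdot>\<^sub>m 1\<^sub>m n"
proof (rule eq_matI)
  fix k l assume "k < dim_row (of_nat d \<cdot>\<^sub>m 1\<^sub>m n :: complex mat)" "l < dim_col (of_nat d \<cdot>\<^sub>m 1\<^sub>m n :: complex mat)"
  then have k: "k < n" and l: "l < n" by auto
  have "(transpose_mat H * H) $$ (k, l) = (\<Sum>i\<in>{0..<N}. (if snd (xs ! i) = vs ! k then 1 else 0) * (if snd (xs ! i) = vs ! l then 1 else 0))"
    using k l by (subst mult_entry[of _ n N _ n], auto simp: H_def)
  also have "\<dots> = (\<Sum>a\<in>arcs V E. (if snd a = vs ! k then 1 else 0) * (if snd a = vs ! l then 1 else 0))"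
    by (rule sum_xs)
  also have "\<dots> = (\<Sum>a\<in>arcs V E. if k = l then (if snd a = vs ! k then 1 else 0) else 0)"
    using nth_eq_iff_index_eq[OF vs(1)] k l unfolding n_def by (intro sum.cong, auto)
  also have "\<dots> = (if k = l then of_nat d else 0)"
    using card_in[OF vs_nth[OF k]] by (auto simp: sum_indicator)
  finally show "(transpose_mat H * H) $$ (k, l) = (of_nat d \<cdot>\<^sub>m 1\<^sub>m n :: complex mat) $$ (k, l)" using k l by simp
qed auto

lemma JJ: "J * J = 1\<^sub>m N"
proof (rule eq_matI)
  fix i j assume "i < dim_row (1\<^sub>m N :: complex mat)" "j < dim_col (1\<^sub>m N :: complex mat)"
  then have i: "i < N" and j: "j < N" by auto
  have "(J * J) $$ (i, j) = (\<Sum>k\<in>{0..<N}. (if xs ! k = prod.swap (xs ! i) then 1 else 0) * (if xs ! j = prod.swap (xs ! k) then 1 else 0))"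
    using i j by (subst mult_entry[of _ N N _ N], auto simp: J_def)
  also have "\<dots> = (\<Sum>a\<in>arcs V E. (if a = prod.swap (xs ! i) then 1 else 0) * (if xs ! j = prod.swap a then 1 else 0))"
    by (rule sum_xs)
  also have "\<dots> = (\<Sum>a\<in>arcs V E. if a = prod.swap (xs ! i) then (if xs ! j = prod.swap a then 1 else 0) else 0)"
    by (rule sum.cong, auto)
  also have "\<dots> = (if xs ! j = xs ! i then 1 else 0)"
    using arcsD(5)[OF xs_nth[OF i]] by (subst sum.delta, auto)
  also have "\<dots> = (if i = j then 1 else 0)"
    using nth_eq_iff_index_eq[OF xs(1)] i j unfolding N_def by auto
  finally show "(J * J) $$ (i, j) = (1\<^sub>m N :: complex mat) $$ (i, j)" using i j by simp
qed auto

lemma swap_neq: "i < N \<Longrightarrow> prod.swap (xs ! i) \<noteq> xs ! i"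
proof -
  assume i: "i < N"
  have "fst (xs ! i) \<noteq> snd (xs ! i)" using arcsD(4)[OF xs_nth[OF i]] .
  then show ?thesis by (cases "xs ! i", auto)
qed

lemma swap_neq': "i < N \<Longrightarrow> xs ! i \<noteq> prod.swap (xs ! i)"
  using swap_neq by metis

lemma RRt: "R * transpose_mat R = 1\<^sub>m N + J"
proof (rule eq_matI)
  fix i j assume "i < dim_row (1\<^sub>m N + J)" "j < dim_col (1\<^sub>m N + J)"
  then have i: "i < N" and j: "j < N" by auto
  have "(R * transpose_mat R) $$ (i, j) = (\<Sum>k\<in>{0..<M}. (if so (xs ! i) = es ! k then 1 else 0) * (if so (xs ! j) = es ! k then 1 else 0))"
    using i j by (subst mult_entry[of _ N M _ N], auto simp: R_def)
  also have "\<dots> = (\<Sum>e\<in>so ` arcs V E. (if so (xs ! i) = e then 1 else 0) * (if so (xs ! j) = e then 1 else 0))"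
    by (rule sum_es)
  also have "\<dots> = (\<Sum>e\<in>so ` arcs V E. if e = so (xs ! i) then (if so (xs ! j) = e then 1 else 0) else 0)"
    by (rule sum.cong, auto)
  also have "\<dots> = (if so (xs ! j) = so (xs ! i) then 1 else 0)"
    using xs_nth[OF i] by (subst sum.delta, auto)
  also have "\<dots> = (if i = j then 1 else 0) + (if xs ! j = prod.swap (xs ! i) then 1 else 0)"
    using so_eq[OF xs_nth[OF i] xs_nth[OF j]] nth_eq_iff_index_eq[OF xs(1)] i j swap_neq[OF i] unfolding N_def by auto
  finally show "(R * transpose_mat R) $$ (i, j) = (1\<^sub>m N + J) $$ (i, j)" using i j by (simp add: J_def)
qed auto

lemma card_es: "k < M \<Longrightarrow> card {a \<in> arcs V E. so a = es ! k} = 2"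
proof -
  assume k: "k < M"
  then have "es ! k \<in> so ` arcs V E" using es(2) nth_mem unfolding M_def by blast
  then obtain a where a: "a \<in> arcs V E" "es ! k = so a" by blast
  show ?thesis using card_so[OF a(1)] a(2) by simp
qed

lemma RtR: "transpose_mat R * R = 2 \<cdot>\<^sub>m 1\<^sub>m M"
proof (rule eq_matI)
  fix k l assume "k < dim_row (2 \<cdot>\<^sub>m 1\<^sub>m M :: complex mat)" "l < dim_col (2 \<cdot>\<^sub>m 1\<^sub>m M :: complex mat)"
  then have k: "k < M" and l: "l < M" by auto
  have "(transpose_mat R * R) $$ (k, l) = (\<Sum>i\<in>{0..<N}. (if so (xs ! i) = es ! k then 1 else 0) * (if so (xs ! i) = es ! l then 1 else 0))"
    using k l by (subst mult_entry[of _ M N _ M], auto simp: R_def)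
  also have "\<dots> = (\<Sum>a\<in>arcs V E. (if so a = es ! k then 1 else 0) * (if so a = es ! l then 1 else 0))"
    by (rule sum_xs)
  also have "\<dots> = (\<Sum>a\<in>arcs V E. if k = l then (if so a = es ! k then 1 else 0) else 0)"
    using nth_eq_iff_index_eq[OF es(1)] k l unfolding M_def by (intro sum.cong, auto)
  also have "\<dots> = (if k = l then 2 else 0)"
    using card_es[OF k] by (auto simp: sum_indicator)
  finally show "(transpose_mat R * R) $$ (k, l) = (2 \<cdot>\<^sub>m 1\<^sub>m M :: complex mat) $$ (k, l)" using k l by simp
qed auto

lemma N_card: "N = card (arcs V E)"
  unfolding N_def using distinct_card[OF xs(1)] xs(2) by simp

lemma M_card: "M = card (so ` arcs V E)"
  unfolding M_def using distinct_card[OF es(1)] es(2) by simp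

lemma N_nd: "N = n * d"
proof -
  have "real N = (\<Sum>a\<in>arcs V E. (\<Sum>v\<in>V. if snd a = v then 1 else 0))"
    using arcsD(2) by (simp add: N_card)
  also have "\<dots> = (\<Sum>v\<in>V. (\<Sum>a\<in>arcs V E. if snd a = v then 1 else 0))"
    by (rule sum.swap)
  also have "\<dots> = (\<Sum>v\<in>V. real d)"
    by (rule sum.cong, simp, subst sum_indicator, auto simp: card_in)
  also have "\<dots> = real (n * d)" by (simp add: n_card)
  finally show ?thesis by linarith
qed

lemma N_2M: "N = 2 * M"
proof -
  have "real N = (\<Sum>a\<in>arcs V E. (\<Sum>e\<in>so ` arcs V E. if so a = e then 1 else 0))"
    by (simp add: N_card)
  also have "\<dots> = (\<Sum>e\<in>so ` arcs V E. (\<Sum>a\<in>arcs V E. if so a = e then 1 else 0))"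
    by (rule sum.swap)
  also have "\<dots> = (\<Sum>e\<in>so ` arcs V E. real 2)"
    by (rule sum.cong, simp, subst sum_indicator, auto simp: card_so)
  also have "\<dots> = real (2 * M)" by (simp add: M_card)
  finally show ?thesis by linarith
qed

lemma Pe_eq: "map_mat complex_of_real (P_edge V E) = (1 / of_nat d) \<cdot>\<^sub>m (H * T)"
proof (rule eq_matI)
  show dr: "dim_row (map_mat complex_of_real (P_edge V E)) = dim_row ((1 / of_nat d) \<cdot>\<^sub>m (H * T))"
    by (simp add: P_edge_def arc_matrix_def Let_def xs_def[symmetric] N_def)
  show dc: "dim_col (map_mat complex_of_real (P_edge V E)) = dim_col ((1 / of_nat d) \<cdot>\<^sub>m (H * T))"
    by (simp add: P_edge_def arc_matrix_def Let_def xs_def[symmetric] N_def)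
  fix i j assume "i < dim_row ((1 / of_nat d) \<cdot>\<^sub>m (H * T))" "j < dim_col ((1 / of_nat d) \<cdot>\<^sub>m (H * T))"
  then have i: "i < N" and j: "j < N" by auto
  obtain u v where uv: "xs ! i = (u, v)" by fastforce
  obtain v' w where vw: "xs ! j = (v', w)" by fastforce
  have a1: "(u, v) \<in> arcs V E" using xs_nth[OF i] uv by simp
  have a2: "(v', w) \<in> arcs V E" using xs_nth[OF j] vw by simp
  have Evw: "E v' w" using a2 arcs_iff by blast
  have dv: "degree V E v = d" using deg arcsD(2)[OF a1] by simp
  have "map_mat complex_of_real (P_edge V E) $$ (i, j) = (if v' = v then 1 / of_nat d else 0)"
    using i j uv vw Evw dv by (cases "v' = v", simp_all add: P_edge_def arc_matrix_def Let_def xs_def[symmetric] N_def[symmetric])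
  also have "\<dots> = ((1 / of_nat d) \<cdot>\<^sub>m (H * T)) $$ (i, j)"
    using i j uv vw by (simp add: HT)
  finally show "map_mat complex_of_real (P_edge V E) $$ (i, j) = ((1 / of_nat d) \<cdot>\<^sub>m (H * T)) $$ (i, j)" .
qed

lemma Pnb_eq: "map_mat complex_of_real (P_nb V E) = (1 / (of_nat d - 1)) \<cdot>\<^sub>m (H * T - J)"
proof (rule eq_matI)
  show dr: "dim_row (map_mat complex_of_real (P_nb V E)) = dim_row ((1 / (of_nat d - 1)) \<cdot>\<^sub>m (H * T - J))"
    by (simp add: P_nb_def arc_matrix_def Let_def xs_def[symmetric] N_def)
  show dc: "dim_col (map_mat complex_of_real (P_nb V E)) = dim_col ((1 / (of_nat d - 1)) \<cdot>\<^sub>m (H * T - J))"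
    by (simp add: P_nb_def arc_matrix_def Let_def xs_def[symmetric] N_def)
  fix i j assume "i < dim_row ((1 / (of_nat d - 1)) \<cdot>\<^sub>m (H * T - J))" "j < dim_col ((1 / (of_nat d - 1)) \<cdot>\<^sub>m (H * T - J))"
  then have i: "i < N" and j: "j < N" by auto
  obtain u v where uv: "xs ! i = (u, v)" by fastforce
  obtain v' w where vw: "xs ! j = (v', w)" by fastforce
  have a1: "(u, v) \<in> arcs V E" using xs_nth[OF i] uv by simp
  have a2: "(v', w) \<in> arcs V E" using xs_nth[OF j] vw by simp
  have Evw: "E v' w" using a2 arcs_iff by blast
  have dv: "degree V E v = d" using deg arcsD(2)[OF a1] by simp
  have "map_mat complex_of_real (P_nb V E) $$ (i, j) = (if v' = v \<and> w \<noteq> u then 1 / (of_nat d - 1) else 0)"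
    using i j uv vw Evw dv by (cases "v' = v", simp_all add: P_nb_def arc_matrix_def Let_def xs_def[symmetric] N_def[symmetric])
  also have "\<dots> = ((1 / (of_nat d - 1)) \<cdot>\<^sub>m (H * T - J)) $$ (i, j)"
    using i j uv vw by (auto simp: HT J_def)
  finally show "map_mat complex_of_real (P_nb V E) $$ (i, j) = ((1 / (of_nat d - 1)) \<cdot>\<^sub>m (H * T - J)) $$ (i, j)" .
qed

lemma HTc[simp]: "H * T \<in> carrier_mat N N" using mult_carrier_mat[OF carriers(1,2)] .

lemma d_pos: "(of_nat d :: complex) \<noteq> 0" using d3 by simp

lemma det_edge:
  assumes x: "x \<noteq> 0"
  shows "poly (char_poly (map_mat complex_of_real (P_edge V E))) x * (of_nat d * x) ^ n
    = x ^ N * poly (char_poly A) (of_nat d * x)"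
proof -
  define c where "c = 1 / (of_nat d * x)"
  have Pe: "map_mat complex_of_real (P_edge V E) \<in> carrier_mat N N" unfolding Pe_eq by simp
  have cH: "c \<cdot>\<^sub>m H \<in> carrier_mat N n" by simp
  have e1: "x \<cdot>\<^sub>m 1\<^sub>m N - map_mat complex_of_real (P_edge V E) = x \<cdot>\<^sub>m (1\<^sub>m N - (c \<cdot>\<^sub>m H) * T)"
    unfolding Pe_eq mult_smult_assoc_mat[OF carriers(1) carriers(2)]
    by (rule eq_matI, insert x d_pos, auto simp: c_def field_simps)
  have "poly (char_poly (map_mat complex_of_real (P_edge V E))) x = x ^ N * det (1\<^sub>m N - (c \<cdot>\<^sub>m H) * T)"
    unfolding poly_char_poly_det[OF Pe] e1 by simp
  also have "det (1\<^sub>m N - (c \<cdot>\<^sub>m H) * T) = det (1\<^sub>m n - T * (c \<cdot>\<^sub>m H))"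
    by (rule sylvester_det[OF cH carriers(2)])
  also have "T * (c \<cdot>\<^sub>m H) = c \<cdot>\<^sub>m A" unfolding mult_smult_distrib[OF carriers(2) carriers(1)] TH ..
  finally have l: "poly (char_poly (map_mat complex_of_real (P_edge V E))) x = x ^ N * det (1\<^sub>m n - c \<cdot>\<^sub>m A)" .
  have e2: "(of_nat d * x) \<cdot>\<^sub>m 1\<^sub>m n - A = (of_nat d * x) \<cdot>\<^sub>m (1\<^sub>m n - c \<cdot>\<^sub>m A)"
    by (rule eq_matI, insert x d_pos, auto simp: c_def field_simps)
  have r: "poly (char_poly A) (of_nat d * x) = (of_nat d * x) ^ n * det (1\<^sub>m n - c \<cdot>\<^sub>m A)"
    unfolding poly_char_poly_det[OF carriers(4)] e2 by simp
  show ?thesis unfolding l r by simp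
qed

lemma c_nz: "(of_nat d - 1 :: complex) \<noteq> 0"
proof -
  have "(of_nat d :: complex) \<noteq> of_nat 1" using d3 by (simp only: of_nat_eq_iff)
  then show ?thesis by simp
qed

lemma det_J:
  assumes w: "w \<noteq> 1"
  shows "det (w \<cdot>\<^sub>m 1\<^sub>m N + J) = (w - 1) ^ N * ((w + 1) / (w - 1)) ^ M"
proof -
  have w1: "w - 1 \<noteq> 0" using w by simp
  define Y where "Y = (- 1 / (w - 1)) \<cdot>\<^sub>m R"
  have Y: "Y \<in> carrier_mat N M" unfolding Y_def by simp
  have Rt: "transpose_mat R \<in> carrier_mat M N" by simp
  have YR: "Y * transpose_mat R = (- 1 / (w - 1)) \<cdot>\<^sub>m (1\<^sub>m N + J)"
    unfolding Y_def mult_smult_assoc_mat[OF carriers(5) Rt] RRt ..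
  have e1: "w \<cdot>\<^sub>m 1\<^sub>m N + J = (w - 1) \<cdot>\<^sub>m (1\<^sub>m N - Y * transpose_mat R)"
    unfolding YR by (rule eq_matI, insert w1, auto simp: field_simps J_def)
  have RY: "transpose_mat R * Y = (- 1 / (w - 1)) \<cdot>\<^sub>m (2 \<cdot>\<^sub>m 1\<^sub>m M)"
    unfolding Y_def mult_smult_distrib[OF Rt carriers(5)] RtR ..
  have e2: "1\<^sub>m M - transpose_mat R * Y = ((w + 1) / (w - 1)) \<cdot>\<^sub>m 1\<^sub>m M"
    unfolding RY by (rule eq_matI, insert w1, auto simp: field_simps)
  have "det (w \<cdot>\<^sub>m 1\<^sub>m N + J) = (w - 1) ^ N * det (1\<^sub>m N - Y * transpose_mat R)"
    unfolding e1 by simp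
  also have "det (1\<^sub>m N - Y * transpose_mat R) = det (1\<^sub>m M - transpose_mat R * Y)"
    by (rule sylvester_det[OF Y Rt])
  also have "\<dots> = ((w + 1) / (w - 1)) ^ M" unfolding e2 by simp
  finally show ?thesis .
qed

lemma det_nb:
  assumes w0: "w \<noteq> 0" and w2: "w ^ 2 \<noteq> 1"
  defines "c \<equiv> of_nat d - (1 :: complex)"
  shows "poly (char_poly (map_mat complex_of_real (P_nb V E))) (w / c)
    = (1 / c) ^ N * det (w \<cdot>\<^sub>m 1\<^sub>m N + J) * (w / (w ^ 2 - 1)) ^ n * poly (char_poly A) (w + c / w)"
proof -
  have c0: "c \<noteq> 0" unfolding c_def by (rule c_nz)
  have w21: "w ^ 2 - 1 \<noteq> 0" using w2 by simp
  have Pn: "map_mat complex_of_real (P_nb V E) \<in> carrier_mat N N" unfolding Pnb_eq using minus_carrier_mat[OF carriers(3), of "H * T"] by simp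
  define K where "K = w \<cdot>\<^sub>m 1\<^sub>m N + J"
  have K: "K \<in> carrier_mat N N" unfolding K_def by simp
  define L where "L = w \<cdot>\<^sub>m 1\<^sub>m N - J"
  have L: "L \<in> carrier_mat N N" unfolding L_def by simp
  define X where "X = (1 / (w ^ 2 - 1)) \<cdot>\<^sub>m (L * H)"
  have LH: "L * H \<in> carrier_mat N n" using L by simp
  have X: "X \<in> carrier_mat N n" unfolding X_def using LH by simp
  have e1: "(w / c) \<cdot>\<^sub>m 1\<^sub>m N - map_mat complex_of_real (P_nb V E) = (1 / c) \<cdot>\<^sub>m (K - H * T)"
    unfolding Pnb_eq K_def c_def[symmetric] by (rule eq_matI, insert c0, auto simp: field_simps J_def)
  have KL: "K * L = (w ^ 2 - 1) \<cdot>\<^sub>m 1\<^sub>m N"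
  proof -
    have "K * L = K * (w \<cdot>\<^sub>m 1\<^sub>m N) - K * J" unfolding L_def
      by (rule mult_minus_distrib_mat[OF K], auto)
    also have "K * (w \<cdot>\<^sub>m 1\<^sub>m N) = w \<cdot>\<^sub>m K" using mult_smult_distrib[OF K, of "1\<^sub>m N" N w] K by simp
    also have "K * J = (w \<cdot>\<^sub>m 1\<^sub>m N) * J + J * J" unfolding K_def
      by (rule add_mult_distrib_mat, auto)
    also have "(w \<cdot>\<^sub>m 1\<^sub>m N) * J = w \<cdot>\<^sub>m J" using mult_smult_assoc_mat[of "1\<^sub>m N" N N J N w] by simp
    finally show ?thesis unfolding JJ K_def by (intro eq_matI, auto simp: J_def power2_eq_square swap_neq' algebra_simps)
  qed
  have KX: "K * X = H"
  proof -
    have "K * X = (1 / (w ^ 2 - 1)) \<cdot>\<^sub>m (K * (L * H))" unfolding X_def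
      by (rule mult_smult_distrib[OF K LH])
    also have "K * (L * H) = (K * L) * H" using assoc_mult_mat[OF K L carriers(1)] by simp
    also have "\<dots> = (w ^ 2 - 1) \<cdot>\<^sub>m H" unfolding KL using mult_smult_assoc_mat[of "1\<^sub>m N" N N H n] by simp
    finally show ?thesis using w21 by (intro eq_matI, auto)
  qed
  have e2: "K - H * T = K * (1\<^sub>m N - X * T)"
  proof -
    have "K * (1\<^sub>m N - X * T) = K * 1\<^sub>m N - K * (X * T)"
      by (rule mult_minus_distrib_mat[OF K], insert X, auto)
    also have "K * (X * T) = (K * X) * T" using assoc_mult_mat[OF K X carriers(2)] by simp
    finally show ?thesis unfolding KX using K by simp
  qed
  have TX: "T * X = (1 / (w ^ 2 - 1)) \<cdot>\<^sub>m (w \<cdot>\<^sub>m A - of_nat d \<cdot>\<^sub>m 1\<^sub>m n)"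
  proof -
    have "T * X = (1 / (w ^ 2 - 1)) \<cdot>\<^sub>m (T * (L * H))" unfolding X_def
      by (rule mult_smult_distrib[OF carriers(2) LH])
    also have "T * (L * H) = (T * L) * H" using assoc_mult_mat[OF carriers(2) L carriers(1)] by simp
    also have "T * L = T * (w \<cdot>\<^sub>m 1\<^sub>m N) - T * J" unfolding L_def
      by (rule mult_minus_distrib_mat[OF carriers(2)], auto)
    also have "T * (w \<cdot>\<^sub>m 1\<^sub>m N) = w \<cdot>\<^sub>m T" using mult_smult_distrib[OF carriers(2), of "1\<^sub>m N" N w] by simp
    also have "(w \<cdot>\<^sub>m T - T * J) * H = (w \<cdot>\<^sub>m T) * H - (T * J) * H"
      by (rule minus_mult_distrib_mat, auto simp: TJ)
    also have "(w \<cdot>\<^sub>m T) * H = w \<cdot>\<^sub>m A" unfolding mult_smult_assoc_mat[OF carriers(2,1)] TH ..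
    also have "(T * J) * H = of_nat d \<cdot>\<^sub>m 1\<^sub>m n" unfolding TJ HtH ..
    finally show ?thesis .
  qed
  have e3: "1\<^sub>m n - T * X = (w / (w ^ 2 - 1)) \<cdot>\<^sub>m ((w + c / w) \<cdot>\<^sub>m 1\<^sub>m n - A)"
    unfolding TX by (rule eq_matI, insert w0 w21, auto simp: field_simps c_def power2_eq_square)
  have "poly (char_poly (map_mat complex_of_real (P_nb V E))) (w / c) = (1 / c) ^ N * det (K - H * T)"
    unfolding poly_char_poly_det[OF Pn] e1 using K by simp
  also have "det (K - H * T) = det K * det (1\<^sub>m N - X * T)"
    unfolding e2 by (rule det_mult[OF K], insert X, auto)
  also have "det (1\<^sub>m N - X * T) = det (1\<^sub>m n - T * X)" by (rule sylvester_det[OF X carriers(2)])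
  also have "\<dots> = (w / (w ^ 2 - 1)) ^ n * poly (char_poly A) (w + c / w)"
    unfolding e3 poly_char_poly_det[OF carriers(4)] by simp
  finally show ?thesis unfolding K_def by simp
qed

definition chi where "chi = char_poly A"
definition Rm where "Rm = proots chi"

lemma chi_monic: "Polynomial.degree chi = n \<and> coeff chi n = 1"
  unfolding chi_def by (rule degree_monic_char_poly[OF carriers(4)])

lemma chi_nz: "chi \<noteq> 0" using chi_monic by auto

lemma chi_decomp: "chi = (\<Prod>x\<in>#Rm. [:-x, 1:])"
  using complex_poly_decompose_multiset[of chi] chi_monic unfolding Rm_def by simp

lemma size_Rm: "size Rm = n" unfolding Rm_def using size_proots_complex chi_monic by simp

lemma poly_chi: "poly chi x = (\<Prod>l\<in>#Rm. x - l)"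
  by (subst chi_decomp, simp add: poly_prod_mset multiset.map_comp o_def)

lemma N_ge: "n \<le> M" "n \<le> N"
proof -
  have "N = n * d" by (rule N_nd)
  then have "3 * n \<le> N" using d3 by simp
  then show "n \<le> M" "n \<le> N" using N_2M by linarith+
qed

lemma pe_eq: "char_poly (map_mat complex_of_real (P_edge V E))
  = [:0, 1:] ^ (N - n) * (\<Prod>l\<in>#Rm. [:-(l / of_nat d), 1:])"
proof (rule poly_eq_cofinite[of "{0}"])
  fix x :: complex assume "x \<notin> {0}"
  then have x: "x \<noteq> 0" by simp
  let ?D = "of_nat d :: complex"
  have h: "poly (char_poly (map_mat complex_of_real (P_edge V E))) x * (?D * x) ^ n
    = x ^ N * (\<Prod>l\<in>#Rm. ?D * x - l)"
    using det_edge[OF x] unfolding chi_def[symmetric] poly_chi .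
  have "(\<Prod>l\<in>#Rm. ?D * x - l) = (\<Prod>l\<in>#Rm. ?D * (x - l / ?D))"
    using d_pos by (intro arg_cong[where f = prod_mset] image_mset_cong, simp add: field_simps)
  also have "\<dots> = ?D ^ n * (\<Prod>l\<in>#Rm. x - l / ?D)" by (simp add: prod_mset_mult_const size_Rm)
  finally have h2: "(\<Prod>l\<in>#Rm. ?D * x - l) = ?D ^ n * (\<Prod>l\<in>#Rm. x - l / ?D)" .
  have xN: "x ^ N = x ^ (N - n) * x ^ n" using N_ge by (simp add: power_add[symmetric])
  have "poly (char_poly (map_mat complex_of_real (P_edge V E))) x * (?D * x) ^ n
     = (x ^ (N - n) * (\<Prod>l\<in>#Rm. x - l / ?D)) * (?D * x) ^ n"
    unfolding h h2 xN by (simp add: power_mult_distrib algebra_simps)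
  then have "poly (char_poly (map_mat complex_of_real (P_edge V E))) x = x ^ (N - n) * (\<Prod>l\<in>#Rm. x - l / ?D)"
    using x d_pos by simp
  then show "poly (char_poly (map_mat complex_of_real (P_edge V E))) x
    = poly ([:0, 1:] ^ (N - n) * (\<Prod>l\<in>#Rm. [:-(l / of_nat d), 1:])) x"
    by (simp add: poly_prod_mset multiset.map_comp o_def)
qed simp

definition cc where "cc = (of_nat d - 1 :: complex)"

lemma pn_eq: "char_poly (map_mat complex_of_real (P_nb V E))
  = [:-(1 / cc), 1:] ^ (M - n) * [:1 / cc, 1:] ^ (M - n) * (\<Prod>l\<in>#Rm. [:1 / cc, -(l / cc), 1:])"
proof (rule poly_eq_cofinite[of "{0, 1 / cc, -(1 / cc)}"])
  have c0: "cc \<noteq> 0" unfolding cc_def by (rule c_nz)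
  fix z :: complex assume "z \<notin> {0, 1 / cc, -(1 / cc)}"
  then have z0: "z \<noteq> 0" and z1: "z \<noteq> 1 / cc" and z2: "z \<noteq> -(1 / cc)" by auto
  define w where "w = cc * z"
  have zw: "z = w / cc" unfolding w_def using c0 by simp
  have w0: "w \<noteq> 0" unfolding w_def using c0 z0 by simp
  have w1: "w \<noteq> 1" unfolding w_def using c0 z1 by (auto simp: field_simps)
  have wm1: "w \<noteq> -1" unfolding w_def using c0 z2 by (auto simp: field_simps)
  have w2: "w ^ 2 \<noteq> 1" using w1 wm1 by (simp add: power2_eq_1_iff)
  have w21: "w ^ 2 - 1 \<noteq> 0" using w2 by simp
  have wm10: "w - 1 \<noteq> 0" using w1 by simp
  have wp10: "w + 1 \<noteq> 0"
  proof
    assume "w + 1 = 0"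
    then have "w = -1" by (simp add: eq_neg_iff_add_eq_0)
    with wm1 show False by simp
  qed
  have L: "poly (char_poly (map_mat complex_of_real (P_nb V E))) z
    = (1 / cc) ^ N * ((w - 1) ^ N * ((w + 1) / (w - 1)) ^ M) * (w / (w ^ 2 - 1)) ^ n
      * (\<Prod>l\<in>#Rm. w + cc / w - l)"
    unfolding zw det_nb[OF w0 w2, folded cc_def] det_J[OF w1] chi_def[symmetric] poly_chi ..
  have S1: "(w - 1) ^ N * ((w + 1) / (w - 1)) ^ M = (w ^ 2 - 1) ^ M"
  proof -
    have e: "(w - 1) ^ N = (w - 1) ^ M * (w - 1) ^ M" unfolding N_2M by (simp add: mult_2 power_add)
    have "(w - 1) ^ N * ((w + 1) / (w - 1)) ^ M = (w - 1) ^ M * ((w - 1) ^ M * ((w + 1) / (w - 1)) ^ M)"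
      unfolding e by (simp add: mult.assoc)
    also have "(w - 1) ^ M * ((w + 1) / (w - 1)) ^ M = (w + 1) ^ M"
      using wm10 by (simp add: power_divide)
    also have "(w - 1) ^ M * (w + 1) ^ M = ((w - 1) * (w + 1)) ^ M" by (simp add: power_mult_distrib)
    also have "(w - 1) * (w + 1) = w ^ 2 - 1" by (simp add: power2_eq_square algebra_simps)
    finally show ?thesis .
  qed
  have S2: "(w / (w ^ 2 - 1)) ^ n * (\<Prod>l\<in>#Rm. w + cc / w - l)
      = (\<Prod>l\<in>#Rm. w ^ 2 - l * w + cc) / (w ^ 2 - 1) ^ n"
  proof -
    have "(\<Prod>l\<in>#Rm. w ^ 2 - l * w + cc) = (\<Prod>l\<in>#Rm. w * (w + cc / w - l))"
      using w0 by (intro arg_cong[where f = prod_mset] image_mset_cong, simp add: field_simps power2_eq_square)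
    also have "\<dots> = w ^ n * (\<Prod>l\<in>#Rm. w + cc / w - l)" by (simp add: prod_mset_mult_const size_Rm)
    finally show ?thesis using w21 by (simp add: power_divide)
  qed
  have S3: "(w ^ 2 - 1) ^ M = (w ^ 2 - 1) ^ (M - n) * (w ^ 2 - 1) ^ n"
    using N_ge by (simp add: power_add[symmetric])
  have LL: "poly (char_poly (map_mat complex_of_real (P_nb V E))) z
     = (1 / cc) ^ N * (w ^ 2 - 1) ^ (M - n) * (\<Prod>l\<in>#Rm. w ^ 2 - l * w + cc)"
  proof -
    have "poly (char_poly (map_mat complex_of_real (P_nb V E))) z
      = (1 / cc) ^ N * (w ^ 2 - 1) ^ M * ((w / (w ^ 2 - 1)) ^ n * (\<Prod>l\<in>#Rm. w + cc / w - l))"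
      unfolding L S1 by (simp add: algebra_simps)
    also have "\<dots> = (1 / cc) ^ N * (w ^ 2 - 1) ^ (M - n) * (\<Prod>l\<in>#Rm. w ^ 2 - l * w + cc)"
      unfolding S2 S3 using w21 by (simp add: field_simps)
    finally show ?thesis .
  qed
  have R1: "(\<Prod>l\<in>#Rm. 1 / cc + z * (- (l / cc) + z)) = (1 / cc ^ 2) ^ n * (\<Prod>l\<in>#Rm. w ^ 2 - l * w + cc)"
  proof -
    have "(\<Prod>l\<in>#Rm. 1 / cc + z * (- (l / cc) + z)) = (\<Prod>l\<in>#Rm. (1 / cc ^ 2) * (w ^ 2 - l * w + cc))"
      unfolding zw using c0 by (intro arg_cong[where f = prod_mset] image_mset_cong, simp add: field_simps power2_eq_square)
    also have "\<dots> = (1 / cc ^ 2) ^ n * (\<Prod>l\<in>#Rm. w ^ 2 - l * w + cc)" by (simp only: prod_mset_mult_const size_Rm)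
    finally show ?thesis .
  qed
  have R2: "(z - 1 / cc) ^ (M - n) * (z + 1 / cc) ^ (M - n) = (1 / cc ^ 2) ^ (M - n) * (w ^ 2 - 1) ^ (M - n)"
  proof -
    have "(z - 1 / cc) * (z + 1 / cc) = (1 / cc ^ 2) * (w ^ 2 - 1)"
      unfolding zw using c0 by (simp add: field_simps power2_eq_square)
    then show ?thesis by (metis power_mult_distrib)
  qed
  have cN: "(1 / cc) ^ N = (1 / cc ^ 2) ^ (M - n) * (1 / cc ^ 2) ^ n"
    unfolding N_2M using N_ge by (simp add: power_add[symmetric] power_mult power_divide)
  show "poly (char_poly (map_mat complex_of_real (P_nb V E))) z
    = poly ([:-(1 / cc), 1:] ^ (M - n) * [:1 / cc, 1:] ^ (M - n) * (\<Prod>l\<in>#Rm. [:1 / cc, -(l / cc), 1:])) z"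
  proof -
    have "poly ([:-(1 / cc), 1:] ^ (M - n) * [:1 / cc, 1:] ^ (M - n) * (\<Prod>l\<in>#Rm. [:1 / cc, -(l / cc), 1:])) z
      = ((z - 1 / cc) ^ (M - n) * (z + 1 / cc) ^ (M - n)) * (\<Prod>l\<in>#Rm. 1 / cc + z * (- (l / cc) + z))"
      by (simp add: poly_prod_mset multiset.map_comp o_def algebra_simps)
    also have "\<dots> = (1 / cc) ^ N * (w ^ 2 - 1) ^ (M - n) * (\<Prod>l\<in>#Rm. w ^ 2 - l * w + cc)"
      unfolding R1 R2 cN by (simp add: algebra_simps)
    finally show ?thesis unfolding LL by simp
  qed
qed simp

lemma Vne: "V \<noteq> {}" using conn unfolding connected_def by blast

lemma n_pos: "0 < n" using Vne finV n_card by (simp add: card_gt_0_iff)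

lemma harmonic_const:
  fixes f :: "'a \<Rightarrow> real"
  assumes h: "\<And>v. v \<in> V \<Longrightarrow> real d * f v = (\<Sum>w\<in>{w\<in>V. E v w}. f w)"
  shows "\<And>u v. u \<in> V \<Longrightarrow> v \<in> V \<Longrightarrow> f u = f v"
proof -
  define Mx where "Mx = Max (f ` V)"
  have fle: "\<And>v. v \<in> V \<Longrightarrow> f v \<le> Mx" unfolding Mx_def by (rule Max_ge, auto)
  have "Mx \<in> f ` V" unfolding Mx_def using Vne by (intro Max_in, auto)
  then obtain v0 where v0: "v0 \<in> V" "f v0 = Mx" by auto
  have stp: "f z = Mx" if y: "y \<in> V" "f y = Mx" and z: "z \<in> V" "E y z" for y z
  proof -
    define Nb where "Nb = {w\<in>V. E y w}"
    have finNb: "finite Nb" unfolding Nb_def by simp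
    have cNb: "card Nb = d" using deg[OF y(1)] unfolding Nb_def degree_def by simp
    have hy: "real d * Mx = (\<Sum>w\<in>Nb. f w)" using h[OF y(1)] y(2) unfolding Nb_def by simp
    have "(\<Sum>w\<in>Nb. Mx - f w) = real (card Nb) * Mx - (\<Sum>w\<in>Nb. f w)"
      by (simp add: sum_subtractf)
    also have "\<dots> = 0" using hy cNb by simp
    finally have sum0: "(\<Sum>w\<in>Nb. Mx - f w) = 0" .
    have nonneg: "\<And>w. w \<in> Nb \<Longrightarrow> 0 \<le> Mx - f w"
    proof -
      fix w assume "w \<in> Nb"
      then have "w \<in> V" unfolding Nb_def by simp
      then show "0 \<le> Mx - f w" using fle by simp
    qed
    have all0: "\<forall>w\<in>Nb. Mx - f w = 0" using sum_nonneg_eq_0_iff[OF finNb nonneg] sum0 by simp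
    have "z \<in> Nb" using z unfolding Nb_def by simp
    with all0 show ?thesis by simp
  qed
  have reach: "f u = Mx" if "(\<lambda>x y. x \<in> V \<and> y \<in> V \<and> E x y)\<^sup>*\<^sup>* v0 u" for u
    using that
  proof (induction rule: rtranclp_induct)
    case base
    then show ?case using v0 by simp
  next
    case (step y z)
    then have "z \<in> V" "E y z" "y \<in> V" by simp_all
    with step.IH show ?case by (intro stp[of y z])
  qed
  fix u v assume u: "u \<in> V" and v: "v \<in> V"
  have cc: "\<forall>u\<in>V. \<forall>v\<in>V. (\<lambda>x y. x \<in> V \<and> y \<in> V \<and> E x y)\<^sup>*\<^sup>* u v"
    using conn unfolding connected_def by (rule conjunct2)
  have "f u = Mx" by (rule reach[OF cc[rule_format, OF v0(1) u]])
  moreover have "f v = Mx" by (rule reach[OF cc[rule_format, OF v0(1) v]])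
  ultimately show "f u = f v" by simp
qed

definition idx where "idx v = (THE k. k < n \<and> vs ! k = v)"

lemma ex1_idx: assumes v: "v \<in> V" shows "\<exists>!k. k < n \<and> vs ! k = v"
proof -
  obtain k where k: "k < n" "vs ! k = v" using v vs(2) unfolding n_def by (metis in_set_conv_nth)
  moreover have "\<And>j. j < n \<and> vs ! j = v \<Longrightarrow> j = k"
    using k nth_eq_iff_index_eq[OF vs(1)] unfolding n_def by metis
  ultimately show ?thesis by blast
qed

lemma index_vs: "v \<in> V \<Longrightarrow> idx v < n \<and> vs ! idx v = v"
  unfolding idx_def by (rule theI', rule ex1_idx)

lemma vs_index: "k < n \<Longrightarrow> idx (vs ! k) = k"
proof -
  assume k: "k < n"
  have "vs ! k \<in> V" using vs_nth[OF k] .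
  from ex1_idx[OF this] k show ?thesis unfolding idx_def by (intro the1_equality, auto)
qed

lemma A_mult_entry: assumes y: "y \<in> carrier_vec n" and k: "k < n"
  shows "(A *\<^sub>v y) $ k = (\<Sum>w\<in>{w\<in>V. E (vs ! k) w}. y $ idx w)"
proof -
  have "(A *\<^sub>v y) $ k = (\<Sum>l\<in>{0..<n}. (if E (vs ! k) (vs ! l) then 1 else 0) * y $ l)"
    using y k by (simp add: A_def scalar_prod_def)
  also have "\<dots> = (\<Sum>l\<in>{0..<n}. (\<lambda>w. if E (vs ! k) w then y $ idx w else 0) (vs ! l))"
    by (rule sum.cong, auto simp: vs_index)
  also have "\<dots> = (\<Sum>w\<in>V. if E (vs ! k) w then y $ idx w else 0)"
    by (rule sum_vs)
  also have "\<dots> = (\<Sum>w\<in>{w\<in>V. E (vs ! k) w}. y $ idx w)"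
    by (simp add: sum.inter_filter)
  finally show ?thesis .
qed

lemma eigen_const:
  assumes y: "y \<in> carrier_vec n" and ev: "A *\<^sub>v y = of_nat d \<cdot>\<^sub>v y"
  shows "\<And>k. k < n \<Longrightarrow> y $ k = y $ 0"
proof -
  define g where "g w = y $ idx w" for w
  have hg: "of_nat d * g v = (\<Sum>w\<in>{w\<in>V. E v w}. g w)" if v: "v \<in> V" for v
  proof -
    have k: "idx v < n" and vk: "vs ! idx v = v" using index_vs[OF v] by auto
    have "(A *\<^sub>v y) $ idx v = of_nat d * y $ idx v" using ev k y by simp
    then show ?thesis using A_mult_entry[OF y k] vk unfolding g_def by simp
  qed
  have hre: "real d * Re (g v) = (\<Sum>w\<in>{w\<in>V. E v w}. Re (g w))" if "v \<in> V" for v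
    using arg_cong[OF hg[OF that], of Re] by (simp add: Re_sum)
  have him: "real d * Im (g v) = (\<Sum>w\<in>{w\<in>V. E v w}. Im (g w))" if "v \<in> V" for v
    using arg_cong[OF hg[OF that], of Im] by (simp add: Im_sum)
  fix k assume k: "k < n"
  have v1: "vs ! k \<in> V" "vs ! 0 \<in> V" using vs_nth k n_pos by auto
  have "Re (g (vs ! k)) = Re (g (vs ! 0))" by (rule harmonic_const[OF hre v1])
  moreover have "Im (g (vs ! k)) = Im (g (vs ! 0))" by (rule harmonic_const[OF him v1])
  ultimately have "g (vs ! k) = g (vs ! 0)" by (simp add: complex_eq_iff)
  then show "y $ k = y $ 0" unfolding g_def using vs_index[OF k] vs_index[OF n_pos] by simp
qed

definition onev :: "complex vec" where "onev = vec n (\<lambda>_. 1)"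
definition Bm where "Bm = char_matrix A (of_nat d)"

lemma onev_carrier[simp]: "onev \<in> carrier_vec n" unfolding onev_def by simp
lemma Bm_carrier[simp]: "Bm \<in> carrier_mat n n" unfolding Bm_def by simp
lemma Bm_dims[simp]: "dim_row Bm = n" "dim_col Bm = n" "dim_vec onev = n"
  unfolding Bm_def onev_def char_matrix_def by simp_all

lemma card_in_V: "w \<in> V \<Longrightarrow> card {v \<in> V. E v w} = d"
proof -
  assume w: "w \<in> V"
  have "{v \<in> V. E v w} = {v \<in> V. E w v}" using Esym by blast
  then show ?thesis using deg[OF w] unfolding degree_def by simp
qed

lemma A_onev: "A *\<^sub>v onev = of_nat d \<cdot>\<^sub>v onev"
proof (rule eq_vecI)
  fix k assume "k < dim_vec (of_nat d \<cdot>\<^sub>v onev)"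
  then have k: "k < n" by simp
  have "(A *\<^sub>v onev) $ k = (\<Sum>w\<in>{w\<in>V. E (vs ! k) w}. onev $ idx w)"
    by (rule A_mult_entry[OF onev_carrier k])
  also have "\<dots> = (\<Sum>w\<in>{w\<in>V. E (vs ! k) w}. 1)"
    by (rule sum.cong, auto simp: onev_def index_vs)
  also have "\<dots> = of_nat d" using deg[OF vs_nth[OF k]] unfolding degree_def by simp
  finally show "(A *\<^sub>v onev) $ k = (of_nat d \<cdot>\<^sub>v onev) $ k" using k by (simp add: onev_def)
qed simp

lemma Bm_mult: assumes x: "x \<in> carrier_vec n"
  shows "Bm *\<^sub>v x = A *\<^sub>v x - of_nat d \<cdot>\<^sub>v x"
proof -
  have "Bm *\<^sub>v x = A *\<^sub>v x + (- of_nat d) \<cdot>\<^sub>v x" unfolding Bm_def char_matrix_def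
    by (rule eq_vecI, insert x, auto simp: add_scalar_prod_distrib[of _ n])
  then show ?thesis using x by (intro eq_vecI, auto)
qed

lemma col_sum: assumes x: "x \<in> carrier_vec n"
  shows "(\<Sum>k\<in>{0..<n}. (A *\<^sub>v x) $ k) = of_nat d * (\<Sum>k\<in>{0..<n}. x $ k)"
proof -
  have "(\<Sum>k\<in>{0..<n}. (A *\<^sub>v x) $ k) = (\<Sum>k\<in>{0..<n}. \<Sum>l\<in>{0..<n}. A $$ (k, l) * x $ l)"
    using x by (intro sum.cong, auto simp: scalar_prod_def)
  also have "\<dots> = (\<Sum>l\<in>{0..<n}. \<Sum>k\<in>{0..<n}. A $$ (k, l) * x $ l)" by (rule sum.swap)
  also have "\<dots> = (\<Sum>l\<in>{0..<n}. of_nat d * x $ l)"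
  proof (rule sum.cong, simp)
    fix l assume "l \<in> {0..<n}"
    then have l: "l < n" by simp
    have "(\<Sum>k\<in>{0..<n}. A $$ (k, l)) = (\<Sum>k\<in>{0..<n}. (\<lambda>v. if E v (vs ! l) then 1 else 0) (vs ! k))"
      using l by (intro sum.cong, auto simp: A_def)
    also have "\<dots> = (\<Sum>v\<in>V. if E v (vs ! l) then 1 else 0)" by (rule sum_vs)
    also have "\<dots> = of_nat d" using card_in_V[OF vs_nth[OF l]] by (simp add: sum_indicator)
    finally have "(\<Sum>k\<in>{0..<n}. A $$ (k, l)) = of_nat d" .
    then show "(\<Sum>k\<in>{0..<n}. A $$ (k, l) * x $ l) = of_nat d * x $ l"
      by (simp add: sum_distrib_right[symmetric])
  qed
  also have "\<dots> = of_nat d * (\<Sum>k\<in>{0..<n}. x $ k)" by (simp add: sum_distrib_left)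
  finally show ?thesis .
qed

lemma Bm_onev: "Bm *\<^sub>v onev = 0\<^sub>v n"
  unfolding Bm_mult[OF onev_carrier] A_onev by (intro eq_vecI, auto simp: onev_def)

lemma Bm2: "Bm ^\<^sub>m 2 = Bm * Bm" by (simp add: numeral_2_eq_2)

lemma Bm_const: assumes y: "y \<in> carrier_vec n" and "Bm *\<^sub>v y = 0\<^sub>v n"
  shows "y = y $ 0 \<cdot>\<^sub>v onev"
proof -
  have e: "A *\<^sub>v y - of_nat d \<cdot>\<^sub>v y = 0\<^sub>v n" using assms(2) unfolding Bm_mult[OF y] .
  have "A *\<^sub>v y = of_nat d \<cdot>\<^sub>v y"
  proof (rule eq_vecI)
    fix i assume "i < dim_vec (of_nat d \<cdot>\<^sub>v y)"
    then have i: "i < n" using y by simp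
    have "(A *\<^sub>v y - of_nat d \<cdot>\<^sub>v y) $ i = 0" using e i by simp
    then show "(A *\<^sub>v y) $ i = (of_nat d \<cdot>\<^sub>v y) $ i" using i y by simp
  qed (use y in simp)
  note ec = eigen_const[OF y this]
  show ?thesis
  proof (rule eq_vecI)
    fix i assume "i < dim_vec (y $ 0 \<cdot>\<^sub>v onev)"
    then have i: "i < n" by simp
    have "y $ i = y $ 0" by (rule ec[OF i])
    then show "y $ i = (y $ 0 \<cdot>\<^sub>v onev) $ i" using i by (simp add: onev_def)
  qed (use y in simp)
qed

lemma ker2: assumes x: "x \<in> mat_kernel (Bm ^\<^sub>m 2)" shows "\<exists>c. x = c \<cdot>\<^sub>v onev"
proof -
  have xc: "x \<in> carrier_vec n" and x0: "(Bm * Bm) *\<^sub>v x = 0\<^sub>v n"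
    using x unfolding mat_kernel_def Bm2 by auto
  define y where "y = Bm *\<^sub>v x"
  have yc: "y \<in> carrier_vec n" unfolding y_def using mult_mat_vec_carrier[OF Bm_carrier xc] .
  have "Bm *\<^sub>v y = 0\<^sub>v n" unfolding y_def using x0 assoc_mult_mat_vec[OF Bm_carrier Bm_carrier xc] by simp
  then have yc0: "y = y $ 0 \<cdot>\<^sub>v onev" by (rule Bm_const[OF yc])
  have "(\<Sum>k\<in>{0..<n}. y $ k) = (\<Sum>k\<in>{0..<n}. (A *\<^sub>v x) $ k) - of_nat d * (\<Sum>k\<in>{0..<n}. x $ k)"
    unfolding y_def Bm_mult[OF xc] using xc by (simp add: sum_subtractf sum_distrib_left)
  also have "\<dots> = 0" unfolding col_sum[OF xc] by simp
  finally have "(\<Sum>k\<in>{0..<n}. y $ k) = 0" .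
  moreover have "(\<Sum>k\<in>{0..<n}. y $ k) = of_nat n * y $ 0"
    by (subst yc0, simp add: onev_def)
  ultimately have "y $ 0 = 0" using n_pos by simp
  then have "y = 0\<^sub>v n" using yc0 by (simp add: onev_def, intro eq_vecI, auto)
  then have "Bm *\<^sub>v x = 0\<^sub>v n" unfolding y_def .
  from Bm_const[OF xc this] show ?thesis by blast
qed

lemma kdim: "kernel_dim (Bm ^\<^sub>m 2) \<le> 1"
proof (rule kernel_dim_le1[of _ n onev])
  show "Bm ^\<^sub>m 2 \<in> carrier_mat n n" by simp
  show "onev \<in> mat_kernel (Bm ^\<^sub>m 2)"
  proof -
    have z: "Bm *\<^sub>v 0\<^sub>v n = 0\<^sub>v n" by (intro eq_vecI, auto simp: scalar_prod_def)
    show ?thesis unfolding mat_kernel_def Bm2 using Bm_onev assoc_mult_mat_vec[OF Bm_carrier Bm_carrier onev_carrier] z by simp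
  qed
  show "\<And>x. x \<in> mat_kernel (Bm ^\<^sub>m 2) \<Longrightarrow> \<exists>c. x = c \<cdot>\<^sub>v onev" by (rule ker2)
qed

lemma chi_root: "poly chi (of_nat d) = 0"
proof -
  have "eigenvector A onev (of_nat d)"
  proof -
    have "onev $ 0 = 1" using n_pos by (simp add: onev_def)
    then have "onev \<noteq> 0\<^sub>v n" using n_pos by auto
    then show ?thesis unfolding eigenvector_def using A_onev by simp
  qed
  then have "eigenvalue A (of_nat d)" unfolding eigenvalue_def by blast
  then show ?thesis unfolding chi_def eigenvalue_root_char_poly[OF carriers(4)] .
qed

lemma order_chi: "Polynomial.order (of_nat d) chi = 1"
proof -
  obtain as where "char_poly A = (\<Prod>a\<leftarrow>as. [:- a, 1:])"
    using char_poly_factorized[OF carriers(4)] by blast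
  from jordan_nf_exists[OF carriers(4) this] obtain n_as where jnf: "jordan_nf A n_as" by blast
  have "dim_gen_eigenspace A (of_nat d) 2 = kernel_dim (Bm ^\<^sub>m 2)"
    unfolding dim_gen_eigenspace_def Bm_def ..
  then have "(\<Sum>k\<leftarrow>map fst [(k, e)\<leftarrow>n_as. e = of_nat d]. min 2 k) \<le> 1"
    using kdim dim_gen_eigenspace[OF jnf, of "of_nat d" 2] by simp
  then have le: "(\<Sum>k\<leftarrow>map fst [(k, e)\<leftarrow>n_as. e = of_nat d]. k) \<le> 1"
    using sum_min2[of "map fst [(k, e)\<leftarrow>n_as. e = of_nat d]"] by (simp add: o_def)
  have "Polynomial.order (of_nat d) chi = (\<Sum>k\<leftarrow>map fst [(k, e)\<leftarrow>n_as. e = of_nat d]. k)"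
    unfolding chi_def jordan_nf_char_poly[OF jnf] by (rule order_prod_jordan)
  then have "Polynomial.order (of_nat d) chi \<le> 1" using le by simp
  moreover have "Polynomial.order (of_nat d) chi \<noteq> 0" using chi_root chi_nz by (simp add: order_root)
  ultimately show ?thesis by simp
qed

lemma count_Rm: "count Rm (of_nat d) = 1"
  unfolding Rm_def using order_chi chi_nz by simp

definition Rp where "Rp = Rm - {#of_nat d#}"

lemma Rm_split: "Rm = add_mset (of_nat d) Rp" and d_notin: "of_nat d \<notin># Rp"
proof -
  have "0 < count Rm (of_nat d)" using count_Rm by simp
  then have "of_nat d \<in># Rm" by (simp only: count_greater_zero_iff)
  then show "Rm = add_mset (of_nat d) Rp" unfolding Rp_def by simp
  show "of_nat d \<notin># Rp" unfolding Rp_def using count_Rm by (simp add: count_eq_zero_iff[symmetric])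
qed

lemma size_Rp: "size Rp = n - 1" using size_Rm Rm_split by (metis diff_Suc_1 size_add_mset)

lemma kemeny_edge_val:
  "kemeny_edge V E = of_nat (N - n) + (\<Sum>l\<in>#Rp. 1 / (1 - l / of_nat d))"
proof -
  have pr: "proots (char_poly (map_mat complex_of_real (P_edge V E)))
      = add_mset 1 (repeat_mset (N - n) {#0#} + image_mset (\<lambda>l. l / of_nat d) Rp)"
  proof -
    have nz: "(\<Prod>l\<in>#Rm. [:-(l / of_nat d), 1:]) \<noteq> 0" by (induction Rm, auto)
    have "proots (char_poly (map_mat complex_of_real (P_edge V E)))
        = proots ([:0, 1:] ^ (N - n)) + proots (\<Prod>l\<in>#Rm. [:-(l / of_nat d), 1:])"
      unfolding pe_eq by (rule proots_mult, simp, rule nz)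
    also have "proots ([:0, 1:] ^ (N - n)) = repeat_mset (N - n) {#0#}"
      using proots_power[of "[:0, 1:]" "N - n"] proots_linear_factor[of 0] by simp
    also have "proots (\<Prod>l\<in>#Rm. [:-(l / of_nat d), 1:]) = image_mset (\<lambda>l. l / of_nat d) Rm"
      by (subst proots_prod_mset_image, simp, simp add: sum_mset_singletons)
    finally show ?thesis unfolding Rm_split using d_pos by simp
  qed
  show ?thesis unfolding kemeny_edge_def kemeny_def pr by (simp add: sum_repeat multiset.map_comp o_def)
qed

lemma quad_sum: assumes l: "l \<noteq> of_nat d"
  shows "(\<Sum>\<rho>\<in>#proots [:1 / cc, -(l / cc), 1:]. 1 / (1 - \<rho>)) = (2 - l / cc) / (1 - l / cc + 1 / cc)"
proof -
  have c0: "cc \<noteq> 0" unfolding cc_def by (rule c_nz)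
  obtain a where a: "proots [:1 / cc, -(l / cc), 1:] = {#a, l / cc - a#}" "1 / cc = a * (l / cc - a)"
    by (rule quadratic_proots)
  have gen: "\<And>s :: complex. (1 - a) * (1 - (s - a)) = 1 - s + a * (s - a)"
    by (simp add: algebra_simps)
  have "(1 - a) * (1 - (l / cc - a)) = 1 - l / cc + a * (l / cc - a)"
    by (rule gen)
  then have ne: "(1 - a) * (1 - (l / cc - a)) = 1 - l / cc + 1 / cc"
    using a(2) by simp
  have "1 - l / cc + 1 / cc = (of_nat d - l) / cc" using c0 by (simp add: cc_def field_simps)
  then have nz: "1 - l / cc + 1 / cc \<noteq> 0" using l c0 by simp
  then have a1: "1 - a \<noteq> 0" and a2: "1 - (l / cc - a) \<noteq> 0" using ne by auto
  have "(\<Sum>\<rho>\<in>#proots [:1 / cc, -(l / cc), 1:]. 1 / (1 - \<rho>)) = 1 / (1 - a) + 1 / (1 - (l / cc - a))"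
    unfolding a(1) by simp
  also have "\<dots> = (2 - l / cc) / ((1 - a) * (1 - (l / cc - a)))"
    using a1 a2 by (simp add: field_simps)
  finally show ?thesis unfolding ne .
qed

lemma Qd: "[:1 / cc, -(of_nat d / cc), 1:] = [:-1, 1:] * [:-(1 / cc), 1:]"
proof -
  have c0: "cc \<noteq> 0" unfolding cc_def by (rule c_nz)
  have "of_nat d / cc = 1 + 1 / cc" using c0 by (simp add: cc_def field_simps)
  then show ?thesis by simp
qed

lemma kemeny_nb_val:
  "kemeny_nb V E = of_nat (M - n) * (1 / (1 - 1 / cc)) + of_nat (M - n) * (1 / (1 + 1 / cc))
     + 1 / (1 - 1 / cc) + (\<Sum>l\<in>#Rp. (2 - l / cc) / (1 - l / cc + 1 / cc))"
proof -
  have c0: "cc \<noteq> 0" unfolding cc_def by (rule c_nz)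
  have nzQ: "\<And>l. [:1 / cc, -(l / cc), 1:] \<noteq> (0 :: complex poly)" by simp
  have nz: "(\<Prod>l\<in>#Rm. [:1 / cc, -(l / cc), 1:]) \<noteq> 0" by (induction Rm, auto)
  have pr: "proots (char_poly (map_mat complex_of_real (P_nb V E)))
      = add_mset 1 (repeat_mset (M - n) {#1 / cc#} + repeat_mset (M - n) {#-(1 / cc)#} + {#1 / cc#}
         + (\<Sum>l\<in>#Rp. proots [:1 / cc, -(l / cc), 1:]))"
  proof -
    have "proots (char_poly (map_mat complex_of_real (P_nb V E)))
        = proots ([:-(1 / cc), 1:] ^ (M - n) * [:1 / cc, 1:] ^ (M - n)) + proots (\<Prod>l\<in>#Rm. [:1 / cc, -(l / cc), 1:])"
      unfolding pn_eq by (rule proots_mult, simp, rule nz)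
    also have "proots ([:-(1 / cc), 1:] ^ (M - n) * [:1 / cc, 1:] ^ (M - n))
        = repeat_mset (M - n) {#1 / cc#} + repeat_mset (M - n) {#-(1 / cc)#}"
      by (subst proots_mult, simp, simp, simp add: proots_power)
    also have "proots (\<Prod>l\<in>#Rm. [:1 / cc, -(l / cc), 1:]) = (\<Sum>l\<in>#Rm. proots [:1 / cc, -(l / cc), 1:])"
      by (rule proots_prod_mset_image[OF nzQ])
    also have "\<dots> = proots [:1 / cc, -(of_nat d / cc), 1:] + (\<Sum>l\<in>#Rp. proots [:1 / cc, -(l / cc), 1:])"
      unfolding Rm_split by simp
    also have "proots [:1 / cc, -(of_nat d / cc), 1:] = {#1, 1 / cc#}"
      unfolding Qd by (subst proots_mult, auto)
    finally show ?thesis by (simp add: add.assoc)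
  qed
  have "kemeny_nb V E = of_nat (M - n) * (1 / (1 - 1 / cc)) + of_nat (M - n) * (1 / (1 - - (1 / cc)))
     + 1 / (1 - 1 / cc) + (\<Sum>l\<in>#Rp. \<Sum>\<rho>\<in>#proots [:1 / cc, -(l / cc), 1:]. 1 / (1 - \<rho>))"
    unfolding kemeny_nb_def kemeny_def pr by (simp add: sum_repeat sum_mset_image_sum)
  also have "(\<Sum>l\<in>#Rp. \<Sum>\<rho>\<in>#proots [:1 / cc, -(l / cc), 1:]. 1 / (1 - \<rho>))
      = (\<Sum>l\<in>#Rp. (2 - l / cc) / (1 - l / cc + 1 / cc))"
    by (intro arg_cong[where f = sum_mset] image_mset_cong quad_sum, use d_notin in blast)
  finally show ?thesis by simp
qed

lemma main: "kemeny_nb V E = (of_nat d - 2) * kemeny_edge V E / of_nat d + 2 * of_nat n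
           + 1 / (of_nat d - 2) - of_nat n / of_nat d"
proof -
  let ?D = "of_nat d :: complex"
  have D0: "?D \<noteq> 0" by (rule d_pos)
  have D1: "?D - 1 \<noteq> 0" by (rule c_nz)
  have D2: "?D - 2 \<noteq> 0"
  proof -
    have "?D \<noteq> of_nat 2" using d3 by (simp only: of_nat_eq_iff)
    then show ?thesis by simp
  qed
  define SE where "SE = (\<Sum>l\<in>#Rp. 1 / (1 - l / ?D))"
  have per: "(2 - l / cc) / (1 - l / cc + 1 / cc) = (?D - 2) / ?D * (1 / (1 - l / ?D)) + 1" if l: "l \<in># Rp" for l
  proof -
    have ld: "?D - l \<noteq> 0" using l d_notin by auto
    show ?thesis unfolding cc_def by (rule per_alg[OF D0 D1 ld])
  qed
  have sumnb: "(\<Sum>l\<in>#Rp. (2 - l / cc) / (1 - l / cc + 1 / cc)) = (?D - 2) / ?D * SE + (of_nat n - 1)"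
  proof -
    have "(\<Sum>l\<in>#Rp. (2 - l / cc) / (1 - l / cc + 1 / cc)) = (\<Sum>l\<in>#Rp. (?D - 2) / ?D * (1 / (1 - l / ?D)) + 1)"
      by (intro arg_cong[where f = sum_mset] image_mset_cong per)
    also have "\<dots> = (\<Sum>l\<in>#Rp. (?D - 2) / ?D * (1 / (1 - l / ?D))) + (\<Sum>l\<in>#Rp. 1)"
      by (rule sum_mset.distrib)
    also have "(\<Sum>l\<in>#Rp. (?D - 2) / ?D * (1 / (1 - l / ?D))) = (?D - 2) / ?D * SE"
      unfolding SE_def by (rule sum_mset_distrib_left[symmetric])
    also have "(\<Sum>l\<in>#Rp. (1::complex)) = of_nat (size Rp)" by simp
    also have "of_nat (size Rp) = (of_nat n - 1 :: complex)" using size_Rp n_pos by (simp add: of_nat_diff)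
    finally show ?thesis .
  qed
  have a: "1 / (1 - 1 / cc) = (?D - 1) / (?D - 2)" using D1 D2 by (simp add: cc_def field_simps)
  have b: "1 / (1 + 1 / cc) = (?D - 1) / ?D" using D1 D0 by (simp add: cc_def field_simps)
  have Mn: "(of_nat (M - n) :: complex) = of_nat n * ?D / 2 - of_nat n"
  proof -
    have "(of_nat M :: complex) * 2 = of_nat n * ?D" using N_2M N_nd
      by (metis mult.commute of_nat_mult of_nat_numeral)
    then show ?thesis using N_ge by (simp add: of_nat_diff field_simps)
  qed
  have Nn: "(of_nat (N - n) :: complex) = ?D * of_nat n - of_nat n"
    using N_ge N_nd by (simp add: of_nat_diff)
  have t: "(of_nat n * ?D / 2 - of_nat n) * ((?D - 1) / (?D - 2) + (?D - 1) / ?D) + (?D - 1) / (?D - 2) + (of_nat n - 1)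
    = (?D - 2) * (?D * of_nat n - of_nat n) / ?D + 2 * of_nat n + 1 / (?D - 2) - of_nat n / ?D"
    using t1[OF D0] D2 by auto
  have sp: "(?D - 2) * ((?D * of_nat n - of_nat n) + SE) / ?D = (?D - 2) * (?D * of_nat n - of_nat n) / ?D + (?D - 2) / ?D * SE"
    by (simp add: distrib_left add_divide_distrib)
  have ke: "(?D * of_nat n - of_nat n) + SE = kemeny_edge V E"
    unfolding kemeny_edge_val Nn SE_def ..
  have "kemeny_nb V E = ((of_nat n * ?D / 2 - of_nat n) * ((?D - 1) / (?D - 2) + (?D - 1) / ?D)
      + (?D - 1) / (?D - 2) + (of_nat n - 1)) + (?D - 2) / ?D * SE"
    unfolding kemeny_nb_val sumnb a b Mn by (simp add: algebra_simps)
  also have "\<dots> = (?D - 2) * ((?D * of_nat n - of_nat n) + SE) / ?D + 2 * of_nat n + 1 / (?D - 2) - of_nat n / ?D"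
    unfolding t sp by (simp add: algebra_simps)
  also have "\<dots> = (?D - 2) * kemeny_edge V E / ?D + 2 * of_nat n + 1 / (?D - 2) - of_nat n / ?D"
    unfolding ke ..
  finally show ?thesis .
qed

lemma main_card: "kemeny_nb V E = (of_nat d - 2) * kemeny_edge V E / of_nat d + 2 * of_nat (card V)
           + 1 / (of_nat d - 2) - of_nat (card V) / of_nat d"
  using main n_card by simp

end

theorem theorem3p2:
  fixes V :: "'a set" and E :: "'a \<Rightarrow> 'a \<Rightarrow> bool" and d n :: nat
  assumes "simple_graph V E" and "connected V E" and "regular V E d"
    and "card V = n" and "d \<ge> 3"
  shows "kemeny_nb V E = (of_nat d - 2) * kemeny_edge V E / of_nat d + 2 * of_nat n
           + 1 / (of_nat d - 2) - of_nat n / of_nat d"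
proof -
  have k: "kgraph V E d" by (rule kgraph.intro) (rule assms)+
  from kgraph.main_card[OF k] show ?thesis unfolding assms(4) .
qed

end
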